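(* Let $\mathbb{X}\subseteq\mathbb{R}^{d_{\mathbb{X}}}$ and $\tilde{\mathbb{X}}\subseteq\mathbb{R}^{d_{\mathbb{X}}}$, let $p(x)$ be a probability distribution on $\mathbb{X}$ and $p(\tilde x\mid x)$ a conditional distribution on $\tilde{\mathbb{X}}$ (the distribution of augmentations $\tilde x$ of $x$). Let $f_\theta:\mathbb{X}\to\mathbb{R}^{d_{\mathbb{Z}}}$ (encoder; it is also applied to augmentations $\tilde x$), $h_\psi:\mathbb{R}^{d_{\mathbb{Z}}}\to\mathbb{R}^{d_{\mathbb{Z}}}$ (aligner) and a continuously differentiable $g_\phi:\mathbb{R}^{d_{\mathbb{Z}}}\to\mathbb{R}^{d_{\mathbb{X}}}$ (decoder). Define $$\mathcal{L}_{\mathrm{RC}}=\mathbb{E}_{p(x)}\mathbb{E}_{p(\tilde x|x)}\|g_\phi(h_\psi(f_\theta(\tilde x)))-x\|_2,\qquad \mathcal{L}_{\mathrm{CL}}=\mathbb{E}_{p(x)}\mathbb{E}_{p(\tilde x|x)}\|h_\psi(f_\theta(\tilde x))-f_\theta(x)\|_2,$$ $$\mathcal{L}_{\mathrm{reg}}=\mathbb{E}_{p(x)}\|g_\phi(f_\theta(x))-x\|_2 .$$ Let $\lambda_{\max}$ and $\lambda_{\min}$ be the constants defined in the context below. If $\lambda_{\max}$ and $\lambda_{\min}$ are non-zero, then (1) $\mathcal{L}_{\mathrm{CL}}+\frac{1}{\lambda_{\max}}\mathcal{L}_{\mathrm{reg}}\ \ge\ \frac{1}{\lambda_{\max}}\mathcal{L}_{\mathrm{RC}}$,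 and (2) $\mathcal{L}_{\mathrm{RC}}+\mathcal{L}_{\mathrm{reg}}\ \ge\ \lambda_{\min}\,\mathcal{L}_{\mathrm{CL}}$.
   Context: $\|\cdot\|_2$ is the Euclidean norm; all expectations are assumed finite. (In the paper a stop-gradient operator is applied to $f_\theta(x)$ in $\mathcal{L}_{\mathrm{CL}}$ and $\mathcal{L}_{\mathrm{reg}}$; it does not change the values of the losses.) Definition of $\lambda_{\max},\lambda_{\min}$: for each pair $(x,\tilde x)$ set $a=f_\theta(x)$, $b=h_\psi(f_\theta(\tilde x))$. Writing $g_{\phi,j}$ for the $j$-th coordinate of $g_\phi$, by the mean value theorem for each $j=1,\dots,d_{\mathbb{X}}$ choose a point $\xi_j$ on the segment between $a$ and $b$ with $g_{\phi,j}(a)-g_{\phi,j}(b)=\nabla g_{\phi,j}(\xi_j)^\top(a-b)$, and let $G(x,\tilde x)\in\mathbb{R}^{d_{\mathbb{X}}\times d_{\mathbb{Z}}}$ be the matrix whose $j$-th row is $\nabla g_{\phi,j}(\xi_j)^\top$. Let $\hat\lambda_{\max}(x,\tilde x)^2$ and $\hat\lambda_{\min}(x,\tilde x)^2$ be the largest and smallest eigenvalues of $G(x,\tilde x)^\top G(x,\tilde x)$, with $\hat\lambda_{\max},\hat\lambda_{\min}\ge 0$. Then $\lambda_{\max}=\sup_{x,\tilde x}\hat\lambda_{\max}(x,\tilde x)$ and $\lambda_{\min}=\inf_{x,\tilde x}\hat\lambda_{\min}(x,\tilde x)$. *)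

theory Defs
  imports "HOL-Analysis.Analysis" "HOL-Probability.Probability"
begin

definition mat_eigenvalue :: "real^'n^'n \<Rightarrow> real \<Rightarrow> bool" where
  "mat_eigenvalue A \<mu> \<longleftrightarrow> (\<exists>v. v \<noteq> 0 \<and> A *v v = \<mu> *\<^sub>R v)"

definition max_eigenvalue :: "real^'n^'n \<Rightarrow> real" where
  "max_eigenvalue A = Max {\<mu>. mat_eigenvalue A \<mu>}"

definition min_eigenvalue :: "real^'n^'n \<Rightarrow> real" where
  "min_eigenvalue A = Min {\<mu>. mat_eigenvalue A \<mu>}"

text \<open>The matrix G(x, xt): its j-th row is the gradient of the j-th coordinate of g
  at the mean-value point xi x xt j.\<close>
definition mvt_matrix ::
  "(real^'z \<Rightarrow> real^'x) \<Rightarrow> (real^'x \<Rightarrow> real^'x \<Rightarrow> 'x \<Rightarrow> real^'z)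
     \<Rightarrow> real^'x \<Rightarrow> real^'x \<Rightarrow> real^'z^'x" where
  "mvt_matrix g \<xi> x xt = (\<chi> j. jacobian g (at (\<xi> x xt j)) $ j)"

definition lam_hat_max where
  "lam_hat_max g \<xi> x xt =
     sqrt (max_eigenvalue (transpose (mvt_matrix g \<xi> x xt) ** mvt_matrix g \<xi> x xt))"

definition lam_hat_min where
  "lam_hat_min g \<xi> x xt =
     sqrt (min_eigenvalue (transpose (mvt_matrix g \<xi> x xt) ** mvt_matrix g \<xi> x xt))"

end

theory Submission
  imports Defs
begin

lemma gram_inner:
  fixes G :: "real^'z^'x"
  shows "u \<bullet> ((transpose G ** G) *v w) = (G *v u) \<bullet> (G *v w)"
proof -
  have "(transpose G ** G) *v w = (G *v w) v* G"
    by (metis matrix_vector_mul_assoc transpose_matrix_vector)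
  then show ?thesis
    by (metis dot_lmul_matrix inner_commute)
qed

lemma psd_null:
  fixes F :: "real^'n \<Rightarrow> real^'n"
  assumes lin: "linear F" and sym: "\<And>u w. u \<bullet> F w = F u \<bullet> w"
    and psd: "\<And>u. u \<bullet> F u \<ge> 0" and v0: "v \<bullet> F v = 0"
  shows "F v = 0"
proof -
  define w where "w = F v"
  define c where "c = w \<bullet> F w"
  have exp: "(v - s *\<^sub>R w) \<bullet> F (v - s *\<^sub>R w) = - 2 * s * (w \<bullet> w) + s^2 * c" for s
  proof -
    have "F (v - s *\<^sub>R w) = F v - s *\<^sub>R F w" using lin by (simp add: linear_diff linear_scale)
    then have "(v - s *\<^sub>R w) \<bullet> F (v - s *\<^sub>R w) = v \<bullet> F v - s * (v \<bullet> F w) - s * (w \<bullet> F v) + s^2 * (w \<bullet> F w)"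
      apply (simp only:)
      by (simp add: inner_diff_left inner_diff_right algebra_simps power2_eq_square)
    moreover have "v \<bullet> F w = w \<bullet> F v" using sym[of v w] by (simp add: inner_commute)
    ultimately show ?thesis using v0 by (simp add: w_def c_def)
  qed
  have ineq: "0 \<le> - 2 * s * (w \<bullet> w) + s^2 * c" for s using psd[of "v - s *\<^sub>R w"] exp[of s] by simp
  have c0: "c \<ge> 0" using psd[of w] by (simp add: c_def)
  have "w \<bullet> w \<le> 0"
  proof (cases "c = 0")
    case True then show ?thesis using ineq[of 1] by simp
  next
    case False
    then have "c > 0" using c0 by simp
    have "0 \<le> - 2 * ((w \<bullet> w)/c) * (w \<bullet> w) + ((w \<bullet> w)/c)^2 * c" by (rule ineq)
    also have "\<dots> = 0 - ((w \<bullet> w) * (w \<bullet> w)) / c" using \<open>c > 0\<close> by (simp add: field_simps power2_eq_square)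
    finally have "(w \<bullet> w) * (w \<bullet> w) \<le> 0" using \<open>c > 0\<close>
      by (simp add: divide_le_0_iff)
    then show ?thesis by (simp add: mult_le_0_iff)
  qed
  then show ?thesis unfolding w_def by (metis antisym inner_eq_zero_iff inner_ge_zero)
qed

lemma quad_scale:
  fixes G :: "real^'z^'x"
  assumes "u \<noteq> 0"
  shows "(G *v u) \<bullet> (G *v u) = (norm u)^2 * ((G *v (u /\<^sub>R norm u)) \<bullet> (G *v (u /\<^sub>R norm u)))"
  using assms by (simp add: matrix_vector_mult_scaleR power2_eq_square field_simps)

lemma gram_linear: "linear (\<lambda>u. a *\<^sub>R u + b *\<^sub>R ((transpose G ** G) *v u))"
  for G :: "real^'z^'x"
  unfolding linear_iff by (simp add: matrix_vector_right_distrib matrix_vector_mult_scaleR algebra_simps)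

lemma gram_sym: "u \<bullet> (a *\<^sub>R w + b *\<^sub>R ((transpose G ** G) *v w)) = (a *\<^sub>R u + b *\<^sub>R ((transpose G ** G) *v u)) \<bullet> w"
  for G :: "real^'z^'x"
  using gram_inner[of u G w] gram_inner[of w G u]
  by (simp add: inner_add_left inner_add_right inner_commute)

lemma gram_eig_nonneg:
  fixes G :: "real^'z^'x"
  assumes "mat_eigenvalue (transpose G ** G) \<mu>"
  shows "\<mu> \<ge> 0"
proof -
  obtain v where v: "v \<noteq> 0" "(transpose G ** G) *v v = \<mu> *\<^sub>R v"
    using assms unfolding mat_eigenvalue_def by blast
  have "\<mu> * (v \<bullet> v) = (G *v v) \<bullet> (G *v v)" using gram_inner[of v G v] v by simp
  moreover have "v \<bullet> v > 0" using v by simp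
  ultimately show ?thesis by (metis inner_ge_zero zero_le_mult_iff not_le)
qed

lemma gram_eig_finite:
  fixes G :: "real^'z^'x"
  shows "finite {\<mu>. mat_eigenvalue (transpose G ** G) \<mu>}"
proof -
  define A where "A = transpose G ** G"
  define E where "E = {\<mu>. mat_eigenvalue A \<mu>}"
  define e where "e \<mu> = (SOME v. v \<noteq> 0 \<and> A *v v = \<mu> *\<^sub>R v)" for \<mu>
  have e: "e \<mu> \<noteq> 0 \<and> A *v e \<mu> = \<mu> *\<^sub>R e \<mu>" if "\<mu> \<in> E" for \<mu>
    using that unfolding E_def mat_eigenvalue_def e_def by (metis (mono_tags, lifting) mem_Collect_eq someI_ex)
  have orth: "e \<mu> \<bullet> e \<nu> = 0" if "\<mu> \<in> E" "\<nu> \<in> E" "\<mu> \<noteq> \<nu>" for \<mu> \<nu>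
  proof -
    have "e \<mu> \<bullet> (A *v e \<nu>) = (A *v e \<mu>) \<bullet> e \<nu>"
      using gram_sym[where u="e \<mu>" and a=0 and b=1 and G=G and w="e \<nu>"] by (simp add: A_def)
    then have "\<nu> * (e \<mu> \<bullet> e \<nu>) = \<mu> * (e \<mu> \<bullet> e \<nu>)" using e that by simp
    then show ?thesis using that by simp
  qed
  have inj: "inj_on e E"
  proof
    fix \<mu> \<nu> assume "\<mu> \<in> E" "\<nu> \<in> E" "e \<mu> = e \<nu>"
    then show "\<mu> = \<nu>" using orth[of \<mu> \<nu>] e[of \<mu>] by auto
  qed
  have "pairwise orthogonal (e ` E)"
    unfolding pairwise_def orthogonal_def using orth by auto
  moreover have "0 \<notin> e ` E" using e by auto
  ultimately have "independent (e ` E)" by (rule pairwise_orthogonal_independent)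
  then have "finite (e ` E)" by (rule independent_imp_finite)
  then have "finite E" using inj finite_imageD by blast
  then show ?thesis by (simp add: E_def A_def)
qed

lemma gram_max:
  fixes G :: "real^'z^'x"
  shows "\<exists>m. mat_eigenvalue (transpose G ** G) m \<and> (\<forall>u. (G *v u) \<bullet> (G *v u) \<le> m * (norm u)^2)"
proof -
  let ?f = "\<lambda>u. (G *v u) \<bullet> (G *v u)"
  have cont: "continuous_on (sphere 0 1) ?f"
    by (intro continuous_intros linear_continuous_on matrix_vector_mul_bounded_linear)
  obtain v where v: "v \<in> sphere 0 1" "\<And>y. y \<in> sphere 0 1 \<Longrightarrow> ?f y \<le> ?f v"
    using continuous_attains_sup[OF compact_sphere _ cont] by fastforce
  define m where "m = ?f v"
  have bound: "?f u \<le> m * (norm u)^2" for u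
  proof (cases "u = 0")
    case True then show ?thesis by simp
  next
    case False
    have "?f (u /\<^sub>R norm u) \<le> m" using v(2)[of "u /\<^sub>R norm u"] False by (simp add: m_def)
    then have "(norm u)^2 * ?f (u /\<^sub>R norm u) \<le> (norm u)^2 * m" by (rule mult_left_mono) simp
    then show ?thesis using quad_scale[OF False, of G] by (simp add: mult.commute)
  qed
  define F where "F = (\<lambda>u. m *\<^sub>R u + (-1) *\<^sub>R ((transpose G ** G) *v u))"
  have "F v = 0"
  proof (rule psd_null[where F=F])
    show "linear F" unfolding F_def by (rule gram_linear)
    show "u \<bullet> F w = F u \<bullet> w" for u w unfolding F_def by (rule gram_sym)
    show "0 \<le> u \<bullet> F u" for u
      using bound[of u] gram_inner[of u G u] by (simp add: F_def inner_diff_right power2_norm_eq_inner)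
    show "v \<bullet> F v = 0"
      using v(1) gram_inner[of v G v] by (simp add: F_def inner_diff_right m_def norm_eq_1)
  qed
  then have "(transpose G ** G) *v v = m *\<^sub>R v" by (simp add: F_def)
  moreover have "v \<noteq> 0" using v(1) by auto
  ultimately show ?thesis using bound unfolding mat_eigenvalue_def by blast
qed

lemma gram_min:
  fixes G :: "real^'z^'x"
  shows "\<exists>m. mat_eigenvalue (transpose G ** G) m \<and> (\<forall>u. m * (norm u)^2 \<le> (G *v u) \<bullet> (G *v u))"
proof -
  let ?f = "\<lambda>u. (G *v u) \<bullet> (G *v u)"
  have cont: "continuous_on (sphere 0 1) ?f"
    by (intro continuous_intros linear_continuous_on matrix_vector_mul_bounded_linear)
  obtain v where v: "v \<in> sphere 0 1" "\<And>y. y \<in> sphere 0 1 \<Longrightarrow> ?f v \<le> ?f y"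
    using continuous_attains_inf[OF compact_sphere _ cont] by fastforce
  define m where "m = ?f v"
  have bound: "m * (norm u)^2 \<le> ?f u" for u
  proof (cases "u = 0")
    case True then show ?thesis by simp
  next
    case False
    have "m \<le> ?f (u /\<^sub>R norm u)" using v(2)[of "u /\<^sub>R norm u"] False by (simp add: m_def)
    then have "(norm u)^2 * m \<le> (norm u)^2 * ?f (u /\<^sub>R norm u)" by (rule mult_left_mono) simp
    then show ?thesis using quad_scale[OF False, of G] by (simp add: mult.commute)
  qed
  define F where "F = (\<lambda>u. (-m) *\<^sub>R u + 1 *\<^sub>R ((transpose G ** G) *v u))"
  have "F v = 0"
  proof (rule psd_null[where F=F])
    show "linear F" unfolding F_def by (rule gram_linear)
    show "u \<bullet> F w = F u \<bullet> w" for u w unfolding F_def by (rule gram_sym)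
    show "0 \<le> u \<bullet> F u" for u
      using bound[of u] gram_inner[of u G u] by (simp add: F_def inner_add_right inner_diff_right power2_norm_eq_inner)
    show "v \<bullet> F v = 0"
      using v(1) gram_inner[of v G v] by (simp add: F_def inner_add_right inner_diff_right m_def norm_eq_1)
  qed
  then have "(transpose G ** G) *v v = m *\<^sub>R v" by (simp add: F_def)
  moreover have "v \<noteq> 0" using v(1) by auto
  ultimately show ?thesis using bound unfolding mat_eigenvalue_def by blast
qed

lemma gram_norm_bounds:
  fixes G :: "real^'z^'x"
  shows "norm (G *v u) \<le> sqrt (max_eigenvalue (transpose G ** G)) * norm u"
    and "sqrt (min_eigenvalue (transpose G ** G)) * norm u \<le> norm (G *v u)"
    and "0 \<le> sqrt (max_eigenvalue (transpose G ** G))"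
    and "0 \<le> sqrt (min_eigenvalue (transpose G ** G))"
proof -
  define E where "E = {\<mu>. mat_eigenvalue (transpose G ** G) \<mu>}"
  have fin: "finite E" unfolding E_def by (rule gram_eig_finite)
  have nn: "\<And>\<mu>. \<mu> \<in> E \<Longrightarrow> 0 \<le> \<mu>" unfolding E_def using gram_eig_nonneg by blast
  obtain m1 where m1: "m1 \<in> E" "\<And>u. (G *v u) \<bullet> (G *v u) \<le> m1 * (norm u)^2"
    using gram_max[of G] unfolding E_def by blast
  obtain m2 where m2: "m2 \<in> E" "\<And>u. m2 * (norm u)^2 \<le> (G *v u) \<bullet> (G *v u)"
    using gram_min[of G] unfolding E_def by blast
  have ne: "E \<noteq> {}" using m1 by auto
  have "m1 \<le> Max E" using fin m1 by simp
  have "Min E \<le> m2" using fin m2 by simp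
  have "0 \<le> Min E" using fin ne nn by simp
  have "0 \<le> Max E" using fin ne nn m1 by (meson Max_ge order_trans)
  then show "0 \<le> sqrt (max_eigenvalue (transpose G ** G))" unfolding max_eigenvalue_def E_def[symmetric] by simp
  show "0 \<le> sqrt (min_eigenvalue (transpose G ** G))" using \<open>0 \<le> Min E\<close> unfolding min_eigenvalue_def E_def[symmetric] by simp
  have "norm (G *v u) = sqrt ((G *v u) \<bullet> (G *v u))" by (simp add: norm_eq_sqrt_inner)
  also have "\<dots> \<le> sqrt (m1 * (norm u)^2)" using m1(2) real_sqrt_le_mono by blast
  also have "\<dots> \<le> sqrt (Max E * (norm u)^2)"
    using \<open>m1 \<le> Max E\<close> by (intro real_sqrt_le_mono mult_right_mono) auto
  also have "\<dots> = sqrt (Max E) * norm u" by (simp add: real_sqrt_mult)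
  finally show "norm (G *v u) \<le> sqrt (max_eigenvalue (transpose G ** G)) * norm u"
    unfolding max_eigenvalue_def E_def[symmetric] .
  have "sqrt (Min E) * norm u = sqrt (Min E * (norm u)^2)" by (simp add: real_sqrt_mult)
  also have "\<dots> \<le> sqrt (m2 * (norm u)^2)"
    using \<open>Min E \<le> m2\<close> by (intro real_sqrt_le_mono mult_right_mono) auto
  also have "\<dots> \<le> sqrt ((G *v u) \<bullet> (G *v u))" using m2(2) real_sqrt_le_mono by blast
  also have "\<dots> = norm (G *v u)" by (simp add: norm_eq_sqrt_inner)
  finally show "sqrt (min_eigenvalue (transpose G ** G)) * norm u \<le> norm (G *v u)"
    unfolding min_eigenvalue_def E_def[symmetric] .
qed

theorem theorem1:
  fixes M :: "(real^'x) measure"               \<comment> \<open>p(x), on X = space M\<close>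
    and K :: "real^'x \<Rightarrow> (real^'x) measure"  \<comment> \<open>p(xt | x), on Xt\<close>
    and X Xt :: "(real^'x) set"
    and f :: "real^'x \<Rightarrow> real^'z"            \<comment> \<open>encoder\<close>
    and h :: "real^'z \<Rightarrow> real^'z"            \<comment> \<open>aligner\<close>
    and g :: "real^'z \<Rightarrow> real^'x"            \<comment> \<open>decoder\<close>
    and \<xi> :: "real^'x \<Rightarrow> real^'x \<Rightarrow> 'x \<Rightarrow> real^'z"
    and L_RC L_CL L_reg lam_max lam_min :: real
  assumes M: "prob_space M" "space M = X"
    and K: "\<And>x. x \<in> X \<Longrightarrow> prob_space (K x) \<and> space (K x) = Xt"
    and g_diff: "\<And>z. g differentiable (at z)"
    and g_C1: "continuous_on UNIV (\<lambda>z. jacobian g (at z))"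
    and \<xi>_mvt: "\<And>x xt j. x \<in> X \<Longrightarrow> xt \<in> Xt \<Longrightarrow>
        \<xi> x xt j \<in> closed_segment (f x) (h (f xt)) \<and>
        g (f x) $ j - g (h (f xt)) $ j = (jacobian g (at (\<xi> x xt j)) $ j) \<bullet> (f x - h (f xt))"
    and int_RC_in: "\<And>x. x \<in> X \<Longrightarrow> integrable (K x) (\<lambda>xt. norm (g (h (f xt)) - x))"
    and int_RC: "integrable M (\<lambda>x. \<integral>xt. norm (g (h (f xt)) - x) \<partial>K x)"
    and int_CL_in: "\<And>x. x \<in> X \<Longrightarrow> integrable (K x) (\<lambda>xt. norm (h (f xt) - f x))"
    and int_CL: "integrable M (\<lambda>x. \<integral>xt. norm (h (f xt) - f x) \<partial>K x)"
    and int_reg: "integrable M (\<lambda>x. norm (g (f x) - x))"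
    and L_RC_def: "L_RC = (\<integral>x. (\<integral>xt. norm (g (h (f xt)) - x) \<partial>K x) \<partial>M)"
    and L_CL_def: "L_CL = (\<integral>x. (\<integral>xt. norm (h (f xt) - f x) \<partial>K x) \<partial>M)"
    and L_reg_def: "L_reg = (\<integral>x. norm (g (f x) - x) \<partial>M)"
    and bdd: "bdd_above {lam_hat_max g \<xi> x xt | x xt. x \<in> X \<and> xt \<in> Xt}"
    and lam_max_def: "lam_max = (SUP p \<in> X \<times> Xt. lam_hat_max g \<xi> (fst p) (snd p))"
    and lam_min_def: "lam_min = (INF p \<in> X \<times> Xt. lam_hat_min g \<xi> (fst p) (snd p))"
    and nz: "lam_max \<noteq> 0" "lam_min \<noteq> 0"
  shows "L_CL + (1 / lam_max) * L_reg \<ge> (1 / lam_max) * L_RC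
         \<and> L_RC + L_reg \<ge> lam_min * L_CL"
proof -
  interpret PM: prob_space M by (rule M(1))
  have Xne: "X \<noteq> {}" using PM.not_empty M(2) by simp
  then obtain x0 where x0: "x0 \<in> X" by auto
  have Xtne: "Xt \<noteq> {}" using K[OF x0] prob_space.not_empty by metis
  then obtain xt0 where xt0: "xt0 \<in> Xt" by auto
  have XX: "X \<times> Xt \<noteq> {}" using x0 xt0 by auto
  have mv: "g (f x) - g (h (f xt)) = mvt_matrix g \<xi> x xt *v (f x - h (f xt))"
    if "x \<in> X" "xt \<in> Xt" for x xt
    using \<xi>_mvt[OF that] by (simp add: vec_eq_iff matrix_vector_mul_component mvt_matrix_def)
  have bddI: "bdd_above ((\<lambda>p. lam_hat_max g \<xi> (fst p) (snd p)) ` (X \<times> Xt))"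
    using bdd by (rule bdd_above_mono) fastforce
  have bddB: "bdd_below ((\<lambda>p. lam_hat_min g \<xi> (fst p) (snd p)) ` (X \<times> Xt))"
    unfolding lam_hat_min_def by (rule bdd_belowI[of _ 0]) (auto intro: gram_norm_bounds(4))
  have lmax: "lam_hat_max g \<xi> x xt \<le> lam_max" if "x \<in> X" "xt \<in> Xt" for x xt
    unfolding lam_max_def using cSUP_upper[OF _ bddI, of "(x, xt)"] that by auto
  have lmin: "lam_min \<le> lam_hat_min g \<xi> x xt" if "x \<in> X" "xt \<in> Xt" for x xt
    unfolding lam_min_def using cINF_lower[OF bddB, of "(x, xt)"] that by auto
  have "0 \<le> lam_hat_max g \<xi> x0 xt0" unfolding lam_hat_max_def by (rule gram_norm_bounds(3))
  then have lpos: "lam_max > 0" using lmax[OF x0 xt0] nz(1) by simp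
  have pw1: "norm (g (h (f xt)) - x) \<le> lam_max * norm (h (f xt) - f x) + norm (g (f x) - x)"
    if "x \<in> X" "xt \<in> Xt" for x xt
  proof -
    have t: "norm (g (h (f xt)) - x) \<le> norm (g (f x) - g (h (f xt))) + norm (g (f x) - x)"
      using norm_triangle_ineq[of "g (h (f xt)) - g (f x)" "g (f x) - x"]
      by (simp add: norm_minus_commute[of "g (h (f xt))"])
    have a: "norm (g (f x) - g (h (f xt))) \<le> lam_hat_max g \<xi> x xt * norm (f x - h (f xt))"
      unfolding mv[OF that] lam_hat_max_def by (rule gram_norm_bounds(1))
    have b: "lam_hat_max g \<xi> x xt * norm (f x - h (f xt)) \<le> lam_max * norm (h (f xt) - f x)"
      using lmax[OF that] by (simp add: norm_minus_commute mult_right_mono)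
    show ?thesis using t a b by linarith
  qed
  have pw2: "lam_min * norm (h (f xt) - f x) \<le> norm (g (f x) - x) + norm (g (h (f xt)) - x)"
    if "x \<in> X" "xt \<in> Xt" for x xt
  proof -
    have a: "lam_min * norm (h (f xt) - f x) \<le> lam_hat_min g \<xi> x xt * norm (f x - h (f xt))"
      using lmin[OF that] by (simp add: norm_minus_commute mult_right_mono)
    have b: "lam_hat_min g \<xi> x xt * norm (f x - h (f xt)) \<le> norm (g (f x) - g (h (f xt)))"
      unfolding mv[OF that] lam_hat_min_def by (rule gram_norm_bounds(2))
    have t: "norm (g (f x) - g (h (f xt))) \<le> norm (g (f x) - x) + norm (g (h (f xt)) - x)"
      using norm_triangle_ineq[of "g (f x) - x" "x - g (h (f xt))"]
      by (simp add: norm_minus_commute[of x])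
    show ?thesis using a b t by linarith
  qed
  have in1: "(\<integral>xt. norm (g (h (f xt)) - x) \<partial>K x)
      \<le> lam_max * (\<integral>xt. norm (h (f xt) - f x) \<partial>K x) + norm (g (f x) - x)"
    if x: "x \<in> X" for x
  proof -
    interpret PK: prob_space "K x" using K[OF x] by blast
    have "(\<integral>xt. norm (g (h (f xt)) - x) \<partial>K x)
        \<le> (\<integral>xt. lam_max * norm (h (f xt) - f x) + norm (g (f x) - x) \<partial>K x)"
      using K[OF x] pw1[OF x] int_RC_in[OF x] int_CL_in[OF x] by (intro integral_mono) auto
    also have "\<dots> = lam_max * (\<integral>xt. norm (h (f xt) - f x) \<partial>K x) + norm (g (f x) - x)"
      using int_CL_in[OF x] PK.prob_space by simp
    finally show ?thesis .
  qed
  have in2: "lam_min * (\<integral>xt. norm (h (f xt) - f x) \<partial>K x)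
      \<le> norm (g (f x) - x) + (\<integral>xt. norm (g (h (f xt)) - x) \<partial>K x)"
    if x: "x \<in> X" for x
  proof -
    interpret PK: prob_space "K x" using K[OF x] by blast
    have "lam_min * (\<integral>xt. norm (h (f xt) - f x) \<partial>K x) = (\<integral>xt. lam_min * norm (h (f xt) - f x) \<partial>K x)"
      by simp
    also have "\<dots> \<le> (\<integral>xt. norm (g (f x) - x) + norm (g (h (f xt)) - x) \<partial>K x)"
      using K[OF x] pw2[OF x] int_RC_in[OF x] int_CL_in[OF x] by (intro integral_mono) auto
    also have "\<dots> = norm (g (f x) - x) + (\<integral>xt. norm (g (h (f xt)) - x) \<partial>K x)"
      using int_RC_in[OF x] PK.prob_space by simp
    finally show ?thesis .
  qed
  have o1: "L_RC \<le> lam_max * L_CL + L_reg"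
  proof -
    have "L_RC \<le> (\<integral>x. lam_max * (\<integral>xt. norm (h (f xt) - f x) \<partial>K x) + norm (g (f x) - x) \<partial>M)"
      unfolding L_RC_def using int_RC int_CL int_reg in1 M(2) by (intro integral_mono) auto
    also have "\<dots> = lam_max * L_CL + L_reg"
      unfolding L_CL_def L_reg_def using int_CL int_reg by simp
    finally show ?thesis .
  qed
  have o2: "lam_min * L_CL \<le> L_reg + L_RC"
  proof -
    have "lam_min * L_CL = (\<integral>x. lam_min * (\<integral>xt. norm (h (f xt) - f x) \<partial>K x) \<partial>M)"
      unfolding L_CL_def by simp
    also have "\<dots> \<le> (\<integral>x. norm (g (f x) - x) + (\<integral>xt. norm (g (h (f xt)) - x) \<partial>K x) \<partial>M)"
      using int_RC int_CL int_reg in2 M(2) by (intro integral_mono) auto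
    also have "\<dots> = L_reg + L_RC"
      unfolding L_RC_def L_reg_def using int_RC int_reg by simp
    finally show ?thesis .
  qed
  have "(1 / lam_max) * L_RC \<le> (1 / lam_max) * (lam_max * L_CL + L_reg)"
    using o1 lpos by (intro mult_left_mono) auto
  also have "\<dots> = L_CL + (1 / lam_max) * L_reg" using lpos by (simp add: field_simps)
  finally show ?thesis using o2 by simp
qed

end
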